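(* For every $i$ with $0\le i\le\rho(m)-1$ and every integer $t$ with $1\le t\le p_i-1$, we have $x^{\alpha_i}(k+t)=0$.
   Context: For $u\in\mathbb{R}$ let $\mathbf 1[u]=1$ if $u\ge 0$ and $\mathbf 1[u]=0$ if $u<0$. Let $m$ be a positive integer and let $\rho(m)$ denote the number of primes $p$ with $2m<p<3m$; assume $\rho(m)\ge 2$. List these primes as $p_0>p_1>\dots>p_{\rho(m)-1}$ and put $\alpha_i=3m-p_i$. Let $k=(6m-1)\rho(m)$, $\mu_i=\lfloor k/p_i\rfloor$, $\beta_i=k-p_i\mu_i$. Define weights $\bar a_j$, $1\le j\le k$: if $\rho(m)$ is even, $\bar a_j=2$ if $j=\ell p_i$ for some $i$ and some $\ell$ with $1\le \ell\le 3\rho(m)/2$, $\bar a_j=-2$ if $j=\ell p_i$ with $3\rho(m)/2<\ell\le 2\rho(m)$, and $\bar a_j=0$ otherwise; if $\rho(m)$ is odd, $\bar a_j=2$ if $j=\ell p_i$ with $1\le\ell\le (3\rho(m)-1)/2$, $\bar a_j=-2$ if $j=\ell p_i$ with $(3\rho(m)+1)/2\le \ell\le 2\rho(m)-2$, $\bar a_j=-1$ if $j=\ell p_i$ with $\ell\in\{2\rho(m)-1,2\rho(m)\}$, and $\bar a_j=0$ otherwise (well defined since the sets $\{\ell p_i:1\le\ell\le2\rho(m)\}$ are pairwise disjoint). Let $\bar\theta=2\rho(m)$. For each $i$ define $x^{\alpha_i}(t)$ for $0\le t\le k-1$ by $x^{\alpha_i}(t)=1$ if $t=\beta_i+\ell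 p_i$ for some $0\le \ell\le\mu_i-1$ and $x^{\alpha_i}(t)=0$ otherwise, and for $t\ge k$ by $x^{\alpha_i}(t)=\mathbf 1\big[\sum_{j=1}^k \bar a_j x^{\alpha_i}(t-j)-\bar\theta\big]$. *)

theory Defs
  imports "HOL-Computational_Algebra.Primes"
begin

definition primes_between :: "nat \<Rightarrow> nat set" where
  "primes_between m = {p. prime p \<and> 2*m < p \<and> p < 3*m}"

definition rho :: "nat \<Rightarrow> nat" where
  "rho m = card (primes_between m)"

definition pr :: "nat \<Rightarrow> nat \<Rightarrow> nat" where
  "pr m i = rev (sorted_list_of_set (primes_between m)) ! i"

definition alpha :: "nat \<Rightarrow> nat \<Rightarrow> nat" where
  "alpha m i = 3*m - pr m i"

definition kk :: "nat \<Rightarrow> nat" where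
  "kk m = (6*m - 1) * rho m"

definition mu :: "nat \<Rightarrow> nat \<Rightarrow> nat" where
  "mu m i = kk m div pr m i"

definition beta :: "nat \<Rightarrow> nat \<Rightarrow> nat" where
  "beta m i = kk m - pr m i * mu m i"

definition mult_in :: "nat \<Rightarrow> nat \<Rightarrow> nat \<Rightarrow> nat \<Rightarrow> bool" where
  "mult_in m lo hi j = (\<exists>i<rho m. \<exists>l. lo \<le> l \<and> l \<le> hi \<and> j = l * pr m i)"

definition abar :: "nat \<Rightarrow> nat \<Rightarrow> int" where
  "abar m j =
    (if even (rho m) then
       (if mult_in m 1 (3 * rho m div 2) j then 2
        else if mult_in m (3 * rho m div 2 + 1) (2 * rho m) j then -2
        else 0)
     else
       (if mult_in m 1 ((3 * rho m - 1) div 2) j then 2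
        else if mult_in m ((3 * rho m + 1) div 2) (2 * rho m - 2) j then -2
        else if mult_in m (2 * rho m - 1) (2 * rho m) j then -1
        else 0))"

definition theta_bar :: "nat \<Rightarrow> int" where
  "theta_bar m = 2 * int (rho m)"

definition ind :: "int \<Rightarrow> int" where
  "ind u = (if u \<ge> 0 then 1 else 0)"

function xrec :: "nat \<Rightarrow> (nat \<Rightarrow> int) \<Rightarrow> int \<Rightarrow> (nat \<Rightarrow> int) \<Rightarrow> nat \<Rightarrow> int" where
  "xrec k a th init t =
     (if t < k then init t
      else ind ((\<Sum>j\<in>{1..k}. a j * xrec k a th init (t - j)) - th))"
  by auto
termination
  by (relation "measure (\<lambda>(k, a, th, init, t). t)") auto

definition x_init :: "nat \<Rightarrow> nat \<Rightarrow> nat \<Rightarrow> int" where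
  "x_init m i t = (if \<exists>l. l < mu m i \<and> t = beta m i + l * pr m i then 1 else 0)"

text \<open>x^{alpha_i}(t)\<close>
definition xa :: "nat \<Rightarrow> nat \<Rightarrow> nat \<Rightarrow> int" where
  "xa m i t = xrec (kk m) (abar m) (theta_bar m) (x_init m i) t"

end

theory Submission
  imports Defs "HOL-Number_Theory.Cong"
begin

lemma pb_finite: "finite (primes_between m)"
  by (rule finite_subset[of _ "{..<3*m}"]) (auto simp: primes_between_def)

lemma pr_in: "i < rho m \<Longrightarrow> pr m i \<in> primes_between m"
proof -
  assume "i < rho m"
  let ?L = "rev (sorted_list_of_set (primes_between m))"
  have "length ?L = rho m" by (simp add: rho_def)
  then have "?L ! i \<in> set ?L" using \<open>i < rho m\<close> by (metis nth_mem)
  then show ?thesis using pb_finite by (simp add: pr_def)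
qed

lemma pr_inj: "i < rho m \<Longrightarrow> j < rho m \<Longrightarrow> pr m i = pr m j \<Longrightarrow> i = j"
proof -
  assume a: "i < rho m" "j < rho m" "pr m i = pr m j"
  let ?L = "rev (sorted_list_of_set (primes_between m))"
  have "length ?L = rho m" by (simp add: rho_def)
  moreover have "distinct ?L" by simp
  ultimately show ?thesis using a nth_eq_iff_index_eq unfolding pr_def by metis
qed

lemma rho_le: "rho m \<le> m - 1"
proof -
  have "primes_between m \<subseteq> {2*m<..<3*m}" by (auto simp: primes_between_def)
  then have "rho m \<le> card {2*m<..<3*m}" unfolding rho_def by (rule card_mono[rotated]) simp
  then show ?thesis by simp
qed

lemma mult_in_mono: "mult_in m lo hi j \<Longrightarrow> hi \<le> hi' \<Longrightarrow> mult_in m lo hi' j"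
  unfolding mult_in_def by (metis order_trans)

lemma abar_le: "abar m j \<le> (if mult_in m 1 (2 * rho m) j then 2 else 0)"
  unfolding abar_def
  by (auto split: if_splits dest: mult_in_mono[where hi'="2 * rho m"])

lemma xrec_01: "init ` UNIV \<subseteq> {0,1} \<Longrightarrow> xrec k a th init t \<in> {0,1}"
  by (subst xrec.simps) (auto simp: ind_def)

lemma xa_01: "xa m i s \<in> {0,1}"
  unfolding xa_def by (rule xrec_01) (auto simp: x_init_def)

theorem lemma6:
  fixes m i t :: nat
  assumes "0 < m" and "rho m \<ge> 2" and "i < rho m" and "1 \<le> t" and "t \<le> pr m i - 1"
  shows "xa m i (kk m + t) = 0"
  using assms(4,5)
proof (induction t rule: less_induct)
  case (less t)
  define p where "p = pr m i"
  define k where "k = kk m"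
  define r where "r = rho m"
  have pp: "p \<in> primes_between m" using pr_in assms(3) p_def by simp
  hence primep: "prime p" and p2m: "2*m < p" by (auto simp: primes_between_def)
  have rle: "r \<le> m - 1" using rho_le r_def by simp
  have tp: "1 \<le> t" "t < p" using less.prems primep prime_gt_0_nat p_def by auto
  define J where "J = {j\<in>{1..k}. j mod p = t mod p \<and> mult_in m 1 (2*r) j}"
  have nz: "j mod p = t mod p" if j: "1 \<le> j" "j \<le> k" and ne: "xa m i (k + t - j) \<noteq> 0" for j
  proof -
    consider "j < t" | "j = t" | "j > t" by linarith
    then show ?thesis
    proof cases
      case 1
      then have "xa m i (kk m + (t - j)) = 0"
        using less.IH[of "t - j"] less.prems j by auto
      moreover have "kk m + (t - j) = k + t - j" using 1 k_def by simp
      ultimately show ?thesis using ne by simp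
    next
      case 2 then show ?thesis by simp
    next
      case 3
      let ?s = "k + t - j"
      have sk: "?s < k" using 3 j by simp
      have "xa m i ?s = x_init m i ?s"
        unfolding xa_def using sk k_def by (subst xrec.simps) simp
      with ne obtain l where l: "?s = beta m i + l * p"
        by (auto simp: x_init_def p_def split: if_splits)
      have "beta m i = k mod p" unfolding beta_def mu_def p_def k_def
        by (simp add: minus_mult_div_eq_mod)
      then have "?s mod p = k mod p" using l by simp
      moreover have "?s + j = k + t" using j by simp
      ultimately have "(k + j) mod p = (k + t) mod p"
        by (metis mod_add_left_eq)
      then have "[k + j = k + t] (mod p)" by (simp add: cong_def)
      then have "[j = t] (mod p)" using cong_add_lcancel_nat by blast
      then show ?thesis by (simp add: cong_def)
    qed
  qed
  have trm: "abar m j * xa m i (k + t - j) \<le> (if j \<in> J then 2 else 0)"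
    if j: "j \<in> {1..k}" for j
  proof -
    have x01: "xa m i (k + t - j) \<in> {0,1}" by (rule xa_01)
    show ?thesis
    proof (cases "xa m i (k + t - j) = 0")
      case True then show ?thesis by simp
    next
      case False
      then have x1: "xa m i (k + t - j) = 1" using x01 by auto
      have "j mod p = t mod p" using nz[OF _ _ False] j by auto
      then show ?thesis using abar_le[of m j] x1 j by (auto simp: J_def r_def)
    qed
  qed
  have finJ: "finite J" unfolding J_def by simp
  have sumle: "(\<Sum>j\<in>{1..k}. abar m j * xa m i (k + t - j)) \<le> 2 * int (card J)"
  proof -
    have "(\<Sum>j\<in>{1..k}. abar m j * xa m i (k + t - j)) \<le> (\<Sum>j\<in>{1..k}. (if j \<in> J then 2 else 0))"
      by (rule sum_mono) (rule trm)
    also have "\<dots> = (\<Sum>j\<in>J. 2)"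
    proof -
      have "{1..k} \<inter> J = J" by (auto simp: J_def)
      then show ?thesis by (simp add: sum.If_cases)
    qed
    also have "\<dots> = 2 * int (card J)" by simp
    finally show ?thesis .
  qed
  define f where "f j = (SOME i'. i' < r \<and> (\<exists>l. 1 \<le> l \<and> l \<le> 2*r \<and> j = l * pr m i'))" for j
  have fprop: "f j < r \<and> (\<exists>l. 1 \<le> l \<and> l \<le> 2*r \<and> j = l * pr m (f j))" if "j \<in> J" for j
  proof -
    have "\<exists>i'. i' < r \<and> (\<exists>l. 1 \<le> l \<and> l \<le> 2*r \<and> j = l * pr m i')"
      using that by (auto simp: J_def mult_in_def r_def)
    then show ?thesis unfolding f_def by (rule someI_ex)
  qed
  have fne: "f j \<noteq> i" if jJ: "j \<in> J" for j
  proof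
    assume "f j = i"
    then obtain l where "j = l * p" using fprop[OF jJ] p_def by auto
    then have "t mod p = 0" using jJ by (auto simp: J_def)
    then show False using tp by simp
  qed
  have finj: "inj_on f J"
  proof (rule inj_onI)
    fix j1 j2 assume j1: "j1 \<in> J" and j2: "j2 \<in> J" and eq: "f j1 = f j2"
    define q where "q = pr m (f j1)"
    obtain l1 where l1: "1 \<le> l1" "l1 \<le> 2*r" "j1 = l1 * q" using fprop[OF j1] q_def by auto
    obtain l2 where l2: "1 \<le> l2" "l2 \<le> 2*r" "j2 = l2 * q" using fprop[OF j2] q_def eq by auto
    have qin: "q \<in> primes_between m" using pr_in fprop[OF j1] q_def r_def by simp
    hence primeq: "prime q" by (simp add: primes_between_def)
    have "q \<noteq> p" using pr_inj[of "f j1" m i] fprop[OF j1] fne[OF j1] assms(3) q_def p_def r_def by auto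
    hence ndvd: "\<not> p dvd q" using primep primeq primes_dvd_imp_eq by blast
    have cm: "j1 mod p = j2 mod p" using j1 j2 by (auto simp: J_def)
    have lt: "2 * r < p" using rle p2m by simp
    have "l1 = l2"
    proof (rule ccontr)
      assume "l1 \<noteq> l2"
      then consider "l1 < l2" | "l2 < l1" by linarith
      then show False
      proof cases
        case 1
        have "l1 * q \<le> l2 * q" using 1 by simp
        moreover have "(l2 * q) mod p = (l1 * q) mod p" using cm l1 l2 by simp
        ultimately have "p dvd (l2 * q - l1 * q)" using mod_eq_dvd_iff_nat by blast
        hence "p dvd (l2 - l1) * q" by (simp add: diff_mult_distrib)
        hence "p dvd (l2 - l1)" using primep ndvd prime_dvd_mult_iff by blast
        moreover have "0 < l2 - l1" "l2 - l1 < p" using 1 l1 l2 lt by auto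
        ultimately show False using nat_dvd_not_less by blast
      next
        case 2
        have "l2 * q \<le> l1 * q" using 2 by simp
        moreover have "(l1 * q) mod p = (l2 * q) mod p" using cm l1 l2 by simp
        ultimately have "p dvd (l1 * q - l2 * q)" using mod_eq_dvd_iff_nat by blast
        hence "p dvd (l1 - l2) * q" by (simp add: diff_mult_distrib)
        hence "p dvd (l1 - l2)" using primep ndvd prime_dvd_mult_iff by blast
        moreover have "0 < l1 - l2" "l1 - l2 < p" using 2 l1 l2 lt by auto
        ultimately show False using nat_dvd_not_less by blast
      qed
    qed
    then show "j1 = j2" using l1 l2 by simp
  qed
  have "f ` J \<subseteq> {..<r} - {i}" using fprop fne by auto
  hence "card J \<le> card ({..<r} - {i})"
    using card_inj_on_le[OF finj] by simp
  also have "\<dots> = r - 1" using assms(3) r_def by simp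
  finally have cJ: "card J \<le> r - 1" .
  have "(\<Sum>j\<in>{1..k}. abar m j * xa m i (k + t - j)) - theta_bar m < 0"
    using sumle cJ assms(2) r_def by (simp add: theta_bar_def)
  moreover have "xa m i (k + t) = ind ((\<Sum>j\<in>{1..k}. abar m j * xa m i (k + t - j)) - theta_bar m)"
    unfolding xa_def k_def by (subst xrec.simps) simp
  ultimately show ?case by (simp add: ind_def k_def)
qed

end
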